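(* Let $P$ be a subsemigroup of a group $Q$ and let $(X,P,T)$ be a directed semigroup action. Then $G(X,P,T)=\{(x,q,y)\in X\times Q\times X:\exists m,n\in P,\ q=mn^{-1},\ x\in U(m),\ y\in U(n),\ x\cdot m=y\cdot n\}$ is a subgroupoid of $X\times Q\times X$, the latter equipped with its natural groupoid structure over $X$: $(x,q,y)(y,q',z)=(x,qq',z)$ and $(x,q,y)^{-1}=(y,q^{-1},x)$.
   Context: $P\subset Q$, $PP\subset P$, $e\in P$. A right (partial) action of $P$ on a set $X$ is a subset $X*P\subset X\times P$ and a map $(x,m)\mapsto x\cdot m$ on $X*P$ such that $(x,e)\in X*P$ with $x\cdot e=x$ for all $x$, and for all $x,m,n$: $(x,mn)\in X*P$ iff $(x,m)\in X*P$ and $(x\cdot m,n)\in X*P$, in which case $(x\cdot m)\cdot n=x\cdot(mn)$. $U(m)=\{x:(x,m)\in X*P\}$. $m\le n$ iff $n=mp$ for some $p\in P$. The action is directed if for all $m,n\in P$ with $U(m)\cap U(n)\neq\emptyset$ there is $r\in P$ with $m\le r$, $n\le r$ and $U(m)\cap U(n)=U(r)$. *)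

theory Defs
  imports "HOL-Algebra.Group"
begin

text \<open>A right partial action of the monoid P (a subset of the group Q containing the unit)
on the set X: domain D (the set X*P) and action map act.\<close>
definition partial_action ::
  "('q, 'b) monoid_scheme \<Rightarrow> 'q set \<Rightarrow> 'x set \<Rightarrow> ('x \<times> 'q) set \<Rightarrow> ('x \<Rightarrow> 'q \<Rightarrow> 'x) \<Rightarrow> bool" where
  "partial_action Q P X D act \<longleftrightarrow>
     D \<subseteq> X \<times> P \<and>
     (\<forall>(x, m) \<in> D. act x m \<in> X) \<and>
     (\<forall>x\<in>X. (x, \<one>\<^bsub>Q\<^esub>) \<in> D \<and> act x \<one>\<^bsub>Q\<^esub> = x) \<and>
     (\<forall>x\<in>X. \<forall>m\<in>P. \<forall>n\<in>P.
        ((x, m \<otimes>\<^bsub>Q\<^esub> n) \<in> D \<longleftrightarrow> (x, m) \<in> D \<and> (act x m, n) \<in> D) \<and>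
        ((x, m \<otimes>\<^bsub>Q\<^esub> n) \<in> D \<longrightarrow> act (act x m) n = act x (m \<otimes>\<^bsub>Q\<^esub> n)))"

definition dom_U :: "'x set \<Rightarrow> ('x \<times> 'q) set \<Rightarrow> 'q \<Rightarrow> 'x set" where
  "dom_U X D m = {x \<in> X. (x, m) \<in> D}"

definition pleq :: "('q, 'b) monoid_scheme \<Rightarrow> 'q set \<Rightarrow> 'q \<Rightarrow> 'q \<Rightarrow> bool" where
  "pleq Q P m n \<longleftrightarrow> (\<exists>p\<in>P. n = m \<otimes>\<^bsub>Q\<^esub> p)"

definition directed_action ::
  "('q, 'b) monoid_scheme \<Rightarrow> 'q set \<Rightarrow> 'x set \<Rightarrow> ('x \<times> 'q) set \<Rightarrow> bool" where
  "directed_action Q P X D \<longleftrightarrow>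
     (\<forall>m\<in>P. \<forall>n\<in>P. dom_U X D m \<inter> dom_U X D n \<noteq> {} \<longrightarrow>
        (\<exists>r\<in>P. pleq Q P m r \<and> pleq Q P n r \<and> dom_U X D m \<inter> dom_U X D n = dom_U X D r))"

definition action_groupoid ::
  "('q, 'b) monoid_scheme \<Rightarrow> 'q set \<Rightarrow> 'x set \<Rightarrow> ('x \<times> 'q) set \<Rightarrow> ('x \<Rightarrow> 'q \<Rightarrow> 'x) \<Rightarrow> ('x \<times> 'q \<times> 'x) set" where
  "action_groupoid Q P X D act =
     {(x, q, y). x \<in> X \<and> q \<in> carrier Q \<and> y \<in> X \<and>
        (\<exists>m\<in>P. \<exists>n\<in>P. q = m \<otimes>\<^bsub>Q\<^esub> inv\<^bsub>Q\<^esub> n \<and> x \<in> dom_U X D m \<and> y \<in> dom_U X D n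
                     \<and> act x m = act y n)}"

end

theory Submission
  imports Defs
begin

theorem lemma5p5:
  fixes Q :: "('q, 'b) monoid_scheme" and P :: "'q set" and X :: "'x set"
    and D :: "('x \<times> 'q) set" and act :: "'x \<Rightarrow> 'q \<Rightarrow> 'x"
  assumes "group Q"
    and "P \<subseteq> carrier Q"
    and "\<And>m n. m \<in> P \<Longrightarrow> n \<in> P \<Longrightarrow> m \<otimes>\<^bsub>Q\<^esub> n \<in> P"
    and "\<one>\<^bsub>Q\<^esub> \<in> P"
    and "partial_action Q P X D act"
    and "directed_action Q P X D"
  shows "action_groupoid Q P X D act \<subseteq> X \<times> carrier Q \<times> X
    \<and> (\<forall>x q y. (x, q, y) \<in> action_groupoid Q P X D act \<longrightarrow>
          (y, inv\<^bsub>Q\<^esub> q, x) \<in> action_groupoid Q P X D act)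
    \<and> (\<forall>x q y q' z. (x, q, y) \<in> action_groupoid Q P X D act \<longrightarrow>
          (y, q', z) \<in> action_groupoid Q P X D act \<longrightarrow>
          (x, q \<otimes>\<^bsub>Q\<^esub> q', z) \<in> action_groupoid Q P X D act)"
  proof -
  interpret G: group Q by fact
  note PA = assms(5)[unfolded partial_action_def]
  have PC: "\<And>p. p \<in> P \<Longrightarrow> p \<in> carrier Q" using assms(2) by blast
  have split: "\<And>x m n. x \<in> X \<Longrightarrow> m \<in> P \<Longrightarrow> n \<in> P \<Longrightarrow>
     (x, m \<otimes>\<^bsub>Q\<^esub> n) \<in> D \<longleftrightarrow> (x, m) \<in> D \<and> (act x m, n) \<in> D"
    using PA by blast
  have comp: "\<And>x m n. x \<in> X \<Longrightarrow> m \<in> P \<Longrightarrow> n \<in> P \<Longrightarrow>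
     (x, m \<otimes>\<^bsub>Q\<^esub> n) \<in> D \<Longrightarrow> act (act x m) n = act x (m \<otimes>\<^bsub>Q\<^esub> n)"
    using PA by blast
  have actX: "\<And>x m. (x, m) \<in> D \<Longrightarrow> act x m \<in> X" using PA by blast
  let ?G = "action_groupoid Q P X D act"
  have A: "?G \<subseteq> X \<times> carrier Q \<times> X" unfolding action_groupoid_def by auto
  have B: "\<forall>x q y. (x, q, y) \<in> ?G \<longrightarrow> (y, inv\<^bsub>Q\<^esub> q, x) \<in> ?G"
  proof (intro allI impI)
    fix x q y assume "(x, q, y) \<in> ?G"
    then obtain m n where h: "x \<in> X" "y \<in> X" "m \<in> P" "n \<in> P" "q = m \<otimes>\<^bsub>Q\<^esub> inv\<^bsub>Q\<^esub> n"
      "x \<in> dom_U X D m" "y \<in> dom_U X D n" "act x m = act y n"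
      unfolding action_groupoid_def by auto
    have iq: "inv\<^bsub>Q\<^esub> q = n \<otimes>\<^bsub>Q\<^esub> inv\<^bsub>Q\<^esub> m"
      using h PC by (simp add: G.inv_mult_group G.inv_inv)
    have ic: "inv\<^bsub>Q\<^esub> q \<in> carrier Q" using h PC by simp
    have ex: "\<exists>ma\<in>P. \<exists>na\<in>P. inv\<^bsub>Q\<^esub> q = ma \<otimes>\<^bsub>Q\<^esub> inv\<^bsub>Q\<^esub> na \<and> y \<in> dom_U X D ma \<and> x \<in> dom_U X D na \<and> act y ma = act x na"
      using h iq by metis
    show "(y, inv\<^bsub>Q\<^esub> q, x) \<in> ?G" unfolding action_groupoid_def
      using h(1,2) ic ex by simp
  qed
  have C: "\<forall>x q y q' z. (x, q, y) \<in> ?G \<longrightarrow> (y, q', z) \<in> ?G \<longrightarrow> (x, q \<otimes>\<^bsub>Q\<^esub> q', z) \<in> ?G"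
  proof (intro allI impI)
    fix x q y q' z assume "(x, q, y) \<in> ?G" "(y, q', z) \<in> ?G"
    then obtain m n m' n' where h: "x \<in> X" "y \<in> X" "z \<in> X" "m \<in> P" "n \<in> P" "m' \<in> P" "n' \<in> P"
      "q = m \<otimes>\<^bsub>Q\<^esub> inv\<^bsub>Q\<^esub> n" "q' = m' \<otimes>\<^bsub>Q\<^esub> inv\<^bsub>Q\<^esub> n'"
      "(x, m) \<in> D" "(y, n) \<in> D" "(y, m') \<in> D" "(z, n') \<in> D"
      "act x m = act y n" "act y m' = act z n'"
      unfolding action_groupoid_def dom_U_def by auto
    have "y \<in> dom_U X D n \<inter> dom_U X D m'" using h unfolding dom_U_def by auto
    then obtain r p p' where r: "r \<in> P" "p \<in> P" "p' \<in> P" "r = n \<otimes>\<^bsub>Q\<^esub> p" "r = m' \<otimes>\<^bsub>Q\<^esub> p'"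
      "y \<in> dom_U X D r"
      using assms(6) h unfolding directed_action_def pleq_def by blast
    have yr: "(y, r) \<in> D" using r unfolding dom_U_def by auto
    have yn: "(act y n, p) \<in> D" using split[of y n p] h r yr by auto
    have ym: "(act y m', p') \<in> D" using split[of y m' p'] h r yr by auto
    have x1: "(x, m \<otimes>\<^bsub>Q\<^esub> p) \<in> D" using split[of x m p] h r yn by auto
    have z1: "(z, n' \<otimes>\<^bsub>Q\<^esub> p') \<in> D" using split[of z n' p'] h r ym by auto
    have "act x (m \<otimes>\<^bsub>Q\<^esub> p) = act (act y n) p" using comp[of x m p] h r x1 by auto
    also have "\<dots> = act y r" using comp[of y n p] h r yr by auto
    also have "\<dots> = act (act y m') p'" using comp[of y m' p'] h r yr by auto
    also have "\<dots> = act z (n' \<otimes>\<^bsub>Q\<^esub> p')" using comp[of z n' p'] h r z1 by auto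
    finally have eq: "act x (m \<otimes>\<^bsub>Q\<^esub> p) = act z (n' \<otimes>\<^bsub>Q\<^esub> p')" .
    have mc: "m \<in> carrier Q" "n \<in> carrier Q" "m' \<in> carrier Q" "n' \<in> carrier Q"
      "p \<in> carrier Q" "p' \<in> carrier Q" using h r PC by auto
    have ninv: "inv\<^bsub>Q\<^esub> n = p \<otimes>\<^bsub>Q\<^esub> inv\<^bsub>Q\<^esub> r"
      using mc r(4) by (simp add: G.inv_mult_group G.m_assoc[symmetric])
    have m'eq: "m' = r \<otimes>\<^bsub>Q\<^esub> inv\<^bsub>Q\<^esub> p'"
      using mc r(5) by (simp add: G.m_assoc)
    have rc: "r \<in> carrier Q" using r PC by auto
    have "q \<otimes>\<^bsub>Q\<^esub> q' = (m \<otimes>\<^bsub>Q\<^esub> p) \<otimes>\<^bsub>Q\<^esub> (inv\<^bsub>Q\<^esub> r \<otimes>\<^bsub>Q\<^esub> r) \<otimes>\<^bsub>Q\<^esub> (inv\<^bsub>Q\<^esub> p' \<otimes>\<^bsub>Q\<^esub> inv\<^bsub>Q\<^esub> n')"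
    proof -
      have c: "\<And>w. w \<in> carrier Q \<Longrightarrow> inv\<^bsub>Q\<^esub> r \<otimes>\<^bsub>Q\<^esub> (r \<otimes>\<^bsub>Q\<^esub> w) = w"
        using rc by (simp add: G.m_assoc[symmetric])
      show ?thesis using mc rc by (simp add: h(8,9) ninv m'eq G.m_assoc c)
    qed
    also have "\<dots> = (m \<otimes>\<^bsub>Q\<^esub> p) \<otimes>\<^bsub>Q\<^esub> inv\<^bsub>Q\<^esub> (n' \<otimes>\<^bsub>Q\<^esub> p')"
      using mc rc by (simp add: G.inv_mult_group G.m_assoc[symmetric])
    finally have qq: "q \<otimes>\<^bsub>Q\<^esub> q' = (m \<otimes>\<^bsub>Q\<^esub> p) \<otimes>\<^bsub>Q\<^esub> inv\<^bsub>Q\<^esub> (n' \<otimes>\<^bsub>Q\<^esub> p')" .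
    show "(x, q \<otimes>\<^bsub>Q\<^esub> q', z) \<in> ?G"
      unfolding action_groupoid_def dom_U_def
      using h mc qq eq x1 z1 assms(3)[of m p] assms(3)[of n' p'] r by auto
  qed
  show ?thesis using A B C by blast
qed

end
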